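(* Let $p\geq 1$. For all $0\leq t\leq 1$ and $a\in \mathbb{C}$, \[ |a-t|^p \geq (1-t)^{p-1} (|a|^p-t), \] and for $p>1$ this inequality is strict unless $a=1$ or $t=0$. Moreover, if $p\geq 2$, then for all $0\leq t\leq 1$ and $a\in\mathbb{C}$, \[ |a-t|^p \geq (1-t)^{p-1} \left(|a|^p-t\right) + c_p \, t^{p/2} \, |a-1|^p, \qquad c_p:=\min_{0<\tau<1/2} \left((1-\tau)^p -\tau^p + p\tau^{p-1}\right), \] where $0<c_p\leq 1$. For $p=2$ this is an equality with $c_2=1$; for $p>2$ it is strict unless $a=1$ or $t=0$. *)

theory Defs
  imports Complex_Main
begin

text \<open>Real power with the usual convention x^0 = 1 (Isabelle's powr has 0 powr 0 = 0).\<close>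
definition rpow :: "real \<Rightarrow> real \<Rightarrow> real" where
  "rpow x y = (if y = 0 then 1 else x powr y)"

definition cfun :: "real \<Rightarrow> real \<Rightarrow> real" where
  "cfun p \<tau> = (1 - \<tau>) powr p - \<tau> powr p + p * \<tau> powr (p - 1)"

text \<open>c_p = min over 0 < tau < 1/2 of cfun p tau (taken as infimum; attainment is part of the theorem).\<close>
definition cconst :: "real \<Rightarrow> real" where
  "cconst p = Inf (cfun p ` {0<..<1/2})"

end

theory Submission
  imports Defs
begin


lemma bern_strict:
  fixes p z :: real assumes p: "p > 1" and z: "z \<ge> 0" "z \<noteq> 1"
  shows "z powr p > 1 + p * (z - 1)"
proof (cases "z > 1")
  case True
  let ?f = "\<lambda>x::real. x powr p - p * x"
  have "?f 1 < ?f z"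
  proof (rule DERIV_pos_imp_increasing_open[OF True])
    fix x :: real assume x: "1 < x" "x < z"
    have "x powr (p-1) > 1 powr (p-1)" using x p by (intro powr_less_mono2) auto
    then have "p * x powr (p-1) - p > 0" using p by simp
    moreover have "DERIV ?f x :> p * x powr (p-1) - p"
      using x by (auto intro!: derivative_eq_intros)
    ultimately show "\<exists>y. DERIV ?f x :> y \<and> y > 0" by blast
  next
    show "continuous_on {1..z} ?f" using p by (intro continuous_intros) auto
  qed
  then show ?thesis by (simp add: algebra_simps)
next
  case False
  then have zl: "z < 1" using z by simp
  let ?f = "\<lambda>x::real. p * x - x powr p"
  have "?f z < ?f 1"
  proof (rule DERIV_pos_imp_increasing_open[OF zl])
    fix x :: real assume x: "z < x" "x < 1"
    have "x powr (p-1) < 1 powr (p-1)" using x p z by (intro powr_less_mono2) auto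
    then have "p - p * x powr (p-1) > 0" using p by simp
    moreover have "DERIV ?f x :> p - p * x powr (p-1)"
      using x z by (auto intro!: derivative_eq_intros)
    ultimately show "\<exists>y. DERIV ?f x :> y \<and> y > 0" by blast
  next
    show "continuous_on {z..1} ?f" using p z
      by (intro continuous_intros continuous_on_powr') auto
  qed
  then show ?thesis by (simp add: algebra_simps)
qed

lemma bern:
  fixes p z :: real assumes p: "p \<ge> 1" and z: "z \<ge> 0"
  shows "z powr p \<ge> 1 + p * (z - 1)"
proof -
  consider "p = 1" | "z = 1" | "p > 1" "z \<noteq> 1" using p by linarith
  then show ?thesis
  proof cases
    case 1 then show ?thesis using z by simp
  next
    case 2 then show ?thesis by simp
  next
    case 3 then show ?thesis using bern_strict[of p z] z by simp
  qed
qed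

lemma tangent:
  fixes p x y :: real assumes p: "p \<ge> 1" and x: "x > 0" and y: "y \<ge> 0"
  shows "y powr p \<ge> x powr p + p * x powr (p-1) * (y - x)"
    and "p > 1 \<Longrightarrow> y \<noteq> x \<Longrightarrow> y powr p > x powr p + p * x powr (p-1) * (y - x)"
proof -
  have yx: "y = x * (y/x)" using x by simp
  have e1: "y powr p = x powr p * (y/x) powr p"
    using x by (metis powr_mult yx)
  have e2: "x powr p = x powr (p-1) * x" using x by (simp add: powr_add[symmetric] powr_diff)
  have key: "x powr p * (1 + p * (y/x - 1)) = x powr p + p * x powr (p-1) * (y - x)"
    using x by (simp add: e2 field_simps)
  have xp: "x powr p > 0" using x by simp
  show "y powr p \<ge> x powr p + p * x powr (p-1) * (y - x)"
    using mult_left_mono[OF bern[OF p, of "y/x"] less_imp_le[OF xp]] x y key e1 by simp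
  assume "p > 1" "y \<noteq> x"
  then have "y/x \<noteq> 1" using x by simp
  with bern_strict[OF \<open>p>1\<close>, of "y/x"] x y have "(y/x) powr p > 1 + p*(y/x - 1)" by simp
  from mult_strict_left_mono[OF this xp] show "y powr p > x powr p + p * x powr (p-1) * (y - x)"
    using key e1 by simp
qed



lemma cmod_eq_one_aux:
  fixes a :: complex and t :: real
  assumes "cmod a = 1" "cmod (a - complex_of_real t) = 1 - t" "t > 0"
  shows "a = 1"
proof -
  have h1: "(Re a)^2 + (Im a)^2 = 1" using assms(1) cmod_power2[of a] by simp
  have h2: "(Re a - t)^2 + (Im a)^2 = (1-t)^2" using assms(2) cmod_power2[of "a - complex_of_real t"] by simp
  have "Re a = 1" using h1 h2 assms(3) by (simp add: power2_eq_square algebra_simps)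
  moreover then have "Im a = 0" using h1 by simp
  ultimately show ?thesis by (simp add: complex_eq_iff)
qed

lemma part1:
  fixes P t :: real and a :: complex
  assumes P: "P \<ge> 1" and t: "0 \<le> t" "t < 1"
  shows "cmod (a - complex_of_real t) powr P \<ge> (1-t) powr (P-1) * (cmod a powr P - t)"
    and "P > 1 \<Longrightarrow> a \<noteq> 1 \<Longrightarrow> t \<noteq> 0 \<Longrightarrow>
         cmod (a - complex_of_real t) powr P > (1-t) powr (P-1) * (cmod a powr P - t)"
proof -
  define d where "d = cmod (a - complex_of_real t)"
  define r where "r = cmod a"
  define \<delta> where "\<delta> = 1 - t"
  have d0: "d \<ge> 0" and r0: "r \<ge> 0" and dl: "\<delta> > 0" using t by (auto simp: d_def r_def \<delta>_def)
  have rm: "r \<le> d + t"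
  proof -
    have "cmod a \<le> cmod (a - complex_of_real t) + cmod (complex_of_real t)"
      by (metis diff_add_cancel norm_triangle_ineq)
    then show ?thesis using t by (simp add: r_def d_def)
  qed
  have scale: "\<delta> powr (P-1) * (\<delta> * (d/\<delta>) powr P) = d powr P"
  proof -
    have "\<delta> powr (P-1) * \<delta> = \<delta> powr P" using dl by (simp add: powr_add[symmetric] powr_diff)
    moreover have "(d/\<delta>) powr P = d powr P / \<delta> powr P" by (simp add: powr_divide)
    ultimately show ?thesis using dl by (metis (no_types, lifting) divide_eq_eq mult.assoc mult.commute powr_gt_zero order_less_irrefl)
  qed
  have dp: "\<delta> powr (P-1) > 0" using dl by simp
  have main: "\<delta> powr (P-1) * (r powr P - t) \<le> d powr P
      \<and> (P > 1 \<longrightarrow> a \<noteq> 1 \<longrightarrow> t \<noteq> 0 \<longrightarrow> \<delta> powr (P-1) * (r powr P - t) < d powr P)"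
  proof (cases "t = 0")
    case True
    then show ?thesis by (simp add: d_def r_def \<delta>_def)
  next
    case False
    then have tp: "t > 0" using t by simp
    define m where "m = d + t"
    have mp: "m > 0" using tp d0 by (simp add: m_def)
    have x0: "d/\<delta> \<ge> 0" using d0 dl by simp
    have T1: "(d/\<delta>) powr P \<ge> m powr P + P * m powr (P-1) * (d/\<delta> - m)"
      by (rule tangent(1)[OF P mp x0])
    have T2: "1 powr P \<ge> m powr P + P * m powr (P-1) * (1 - m)"
      by (rule tangent(1)[OF P mp]) simp
    have comb: "\<delta> * (m powr P + P * m powr (P-1) * (d/\<delta> - m)) + t * (m powr P + P * m powr (P-1) * (1 - m))
        = m powr P"
      using dl by (simp add: m_def \<delta>_def field_simps)
    have conv: "m powr P \<le> \<delta> * (d/\<delta>) powr P + t"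
    proof -
      have "\<delta> * (m powr P + P * m powr (P-1) * (d/\<delta> - m)) \<le> \<delta> * (d/\<delta>) powr P"
        using T1 dl by (intro mult_left_mono) auto
      moreover have "t * (m powr P + P * m powr (P-1) * (1 - m)) \<le> t * 1"
        using T2 t by (intro mult_left_mono) auto
      ultimately show ?thesis using comb by linarith
    qed
    have rp: "r powr P \<le> m powr P" using rm r0 P by (intro powr_mono2) (auto simp: m_def)
    have le: "r powr P - t \<le> \<delta> * (d/\<delta>) powr P" using conv rp by linarith
    have A: "\<delta> powr (P-1) * (r powr P - t) \<le> d powr P"
      using mult_left_mono[OF le less_imp_le[OF dp]] scale by simp
    have B: "\<delta> powr (P-1) * (r powr P - t) < d powr P" if P1: "P > 1" and a1: "a \<noteq> 1"
    proof -
      have lt: "r powr P - t < \<delta> * (d/\<delta>) powr P"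
      proof (cases "r < m")
        case True
        then have "r powr P < m powr P" using r0 P by (intro powr_less_mono2) auto
        then show ?thesis using conv by linarith
      next
        case False
        then have rme: "r = m" using rm by (simp add: m_def)
        have "m powr P < \<delta> * (d/\<delta>) powr P + t"
        proof (cases "d/\<delta> = m")
          case False
          have S1: "(d/\<delta>) powr P > m powr P + P * m powr (P-1) * (d/\<delta> - m)"
            by (rule tangent(2)[OF P mp x0 P1 False])
          have "\<delta> * (m powr P + P * m powr (P-1) * (d/\<delta> - m)) < \<delta> * (d/\<delta>) powr P"
            using S1 dl by (intro mult_strict_left_mono) auto
          moreover have "t * (m powr P + P * m powr (P-1) * (1 - m)) \<le> t * 1"
            using T2 t by (intro mult_left_mono) auto
          ultimately show ?thesis using comb by linarith
        next
          case True
          have m1: "m \<noteq> 1"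
          proof
            assume "m = 1"
            then have "cmod a = 1" "cmod (a - complex_of_real t) = 1 - t"
              using rme True dl by (auto simp: r_def d_def \<delta>_def field_simps)
            then show False using cmod_eq_one_aux tp a1 by blast
          qed
          have S2: "1 powr P > m powr P + P * m powr (P-1) * (1 - m)"
            by (rule tangent(2)[OF P mp _ P1]) (use m1 in auto)
          have "\<delta> * (m powr P + P * m powr (P-1) * (d/\<delta> - m)) \<le> \<delta> * (d/\<delta>) powr P"
            using T1 dl by (intro mult_left_mono) auto
          moreover have "t * (m powr P + P * m powr (P-1) * (1 - m)) < t * 1"
            using S2 tp by (intro mult_strict_left_mono) auto
          ultimately show ?thesis using comb by linarith
        qed
        then show ?thesis using rme by simp
      qed
      show ?thesis using mult_strict_left_mono[OF lt dp] scale by simp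
    qed
    show ?thesis using A B by blast
  qed
  show "cmod (a - complex_of_real t) powr P \<ge> (1-t) powr (P-1) * (cmod a powr P - t)"
    using main by (simp add: d_def r_def \<delta>_def)
  show "P > 1 \<Longrightarrow> a \<noteq> 1 \<Longrightarrow> t \<noteq> 0 \<Longrightarrow>
         cmod (a - complex_of_real t) powr P > (1-t) powr (P-1) * (cmod a powr P - t)"
    using main by (simp add: d_def r_def \<delta>_def)
qed


lemma powr_split:
  fixes r p :: real assumes "r > 0"
  shows "r powr p = r powr (p-1) * r" and "r powr (p-1) = r powr (p-2) * r"
    and "r powr p = r powr (p-2) * r^2"
proof -
  have g: "r powr (x+1) = r powr x * r" for x
    using assms by (simp add: powr_add)
  show 1: "r powr p = r powr (p-1) * r" using g[of "p-1"] by simp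
  show 2: "r powr (p-1) = r powr (p-2) * r" using g[of "p-2"] by (simp add: algebra_simps)
  show "r powr p = r powr (p-2) * r^2" using 1 2 by (metis mult.assoc power2_eq_square)
qed

lemma L2base:
  fixes p z :: real assumes p: "p \<ge> 2" and z: "z \<ge> 0"
  shows "(1+z) powr p \<ge> 1 + p*z + p*(p-1)/2 * z^2"
    and "p > 2 \<Longrightarrow> z > 0 \<Longrightarrow> (1+z) powr p > 1 + p*z + p*(p-1)/2 * z^2"
proof -
  let ?k = "\<lambda>x::real. (1+x) powr p - p*x - p*(p-1)/2 * x^2"
  have der: "DERIV ?k x :> p * (1+x) powr (p-1) - p - p*(p-1)*x" if "x \<ge> 0" for x
    using that by (auto intro!: derivative_eq_intros simp: power2_eq_square field_simps)
  have dnn: "p * (1+x) powr (p-1) - p - p*(p-1)*x \<ge> 0" if "x \<ge> 0" for x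
  proof -
    have "(1+x) powr (p-1) \<ge> 1 + (p-1)*((1+x) - 1)" using bern[of "p-1" "1+x"] p that by simp
    then have "p * (1+x) powr (p-1) \<ge> p * (1 + (p-1)*x)" using p by (intro mult_left_mono) auto
    then show ?thesis by (simp add: algebra_simps)
  qed
  have "?k 0 \<le> ?k z"
    by (rule DERIV_nonneg_imp_nondecreasing[OF z]) (use der dnn in blast)
  then show "(1+z) powr p \<ge> 1 + p*z + p*(p-1)/2 * z^2" by simp
  assume p2: "p > 2" and zp: "z > 0"
  have "?k 0 < ?k z"
  proof (rule DERIV_pos_imp_increasing_open[OF zp])
    fix x :: real assume x: "0 < x" "x < z"
    have "(1+x) powr (p-1) > 1 + (p-1)*((1+x) - 1)" using bern_strict[of "p-1" "1+x"] p2 x by simp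
    then have "p * (1+x) powr (p-1) > p * (1 + (p-1)*x)" using p by (intro mult_strict_left_mono) auto
    then have "p * (1+x) powr (p-1) - p - p*(p-1)*x > 0" by (simp add: algebra_simps)
    moreover have "DERIV ?k x :> p * (1+x) powr (p-1) - p - p*(p-1)*x" using der x by simp
    ultimately show "\<exists>y. DERIV ?k x :> y \<and> y > 0" by blast
  next
    show "continuous_on {0..z} ?k" by (intro continuous_intros) auto
  qed
  then show "(1+z) powr p > 1 + p*z + p*(p-1)/2 * z^2" by simp
qed

lemma L1base:
  fixes p z :: real assumes p: "p \<ge> 2" and z: "0 \<le> z" "z \<le> 1"
  shows "(1-z) powr p \<le> 1 - p*z + p*(p-1)/2 * z^2"
proof -
  let ?k = "\<lambda>x::real. - p*x + p*(p-1)/2 * x^2 - (1-x) powr p"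
  have "?k 0 \<le> ?k z"
  proof (rule DERIV_nonneg_imp_increasing_open[OF z(1)])
    fix x :: real assume x: "0 < x" "x < z"
    have der: "DERIV ?k x :> - p + p*(p-1)*x + p * (1-x) powr (p-1)"
      using x z by (auto intro!: derivative_eq_intros simp: power2_eq_square field_simps)
    have "(1-x) powr (p-1) \<ge> 1 + (p-1)*((1-x) - 1)" using bern[of "p-1" "1-x"] p x z by simp
    then have "p * (1-x) powr (p-1) \<ge> p * (1 - (p-1)*x)" using p by (intro mult_left_mono) auto
    then have "- p + p*(p-1)*x + p * (1-x) powr (p-1) \<ge> 0" by (simp add: algebra_simps)
    then show "\<exists>y. DERIV ?k x :> y \<and> y \<ge> 0" using der by blast
  next
    show "continuous_on {0..z} ?k" using p z
      by (intro continuous_intros continuous_on_powr') auto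
  qed
  then show ?thesis by simp
qed


lemma Phi:
  fixes p s \<rho> r :: real
  assumes p: "p \<ge> 2" and s: "0 \<le> s" "s \<le> 1" and \<rho>: "0 < \<rho>" "\<rho> \<le> 1"
    and r: "r = \<rho> - s * (1-\<rho>)" "r \<ge> 0"
  shows "r powr p \<le> (1-s^2) * \<rho> powr p - p * s * (1+s) * \<rho> powr (p-1) * (1-\<rho>) + s^2"
    and "p > 2 \<Longrightarrow> s > 0 \<Longrightarrow> \<rho> < 1 \<Longrightarrow>
         r powr p < (1-s^2) * \<rho> powr p - p * s * (1+s) * \<rho> powr (p-1) * (1-\<rho>) + s^2"
proof -
  define A where "A = \<rho> powr (p-2)"
  have A0: "A > 0" using \<rho> by (simp add: A_def)
  have e1: "\<rho> powr (p-1) = A * \<rho>" and e2: "\<rho> powr p = A * \<rho>^2"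
    using powr_split[OF \<rho>(1), of p] by (auto simp: A_def)
  define z where "z = s * (1-\<rho>) / \<rho>"
  have z0: "z \<ge> 0" using s \<rho> by (simp add: z_def)
  have z1: "z \<le> 1" using r \<rho> by (simp add: z_def field_simps)
  have rz: "r / \<rho> = 1 - z" using r \<rho> by (simp add: z_def field_simps)
  have "(r/\<rho>) powr p = r powr p / \<rho> powr p" by (simp add: powr_divide)
  then have Lb: "r powr p / (A * \<rho>^2) \<le> 1 - p*z + p*(p-1)/2 * z^2"
    using L1base[OF p z0 z1] rz e2 by simp
  have L1: "r powr p \<le> A * \<rho>^2 - p * A * \<rho> * s * (1-\<rho>) + p*(p-1)/2 * A * s^2 * (1-\<rho>)^2"
  proof -
    have "r powr p \<le> (A * \<rho>^2) * (1 - p*z + p*(p-1)/2 * z^2)"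
      using Lb A0 \<rho> by (simp add: divide_le_eq mult.commute)
    also have "\<dots> = A * \<rho>^2 - p * A * \<rho> * s * (1-\<rho>) + p*(p-1)/2 * A * s^2 * (1-\<rho>)^2"
      using \<rho> by (simp add: z_def field_simps power2_eq_square)
    finally show ?thesis .
  qed
  define w where "w = (1-\<rho>)/\<rho>"
  have w0: "w \<ge> 0" using \<rho> by (simp add: w_def)
  have ow: "1 + w = 1/\<rho>" using \<rho> by (simp add: w_def field_simps)
  have ow2: "(1+w) powr p = 1 / (A * \<rho>^2)" using ow e2 by (simp add: powr_divide)
  have L2conv: "1 / (A * \<rho>^2) \<ge> X \<Longrightarrow> 1 \<ge> (A * \<rho>^2) * X" for X
    using A0 \<rho> by (simp add: le_divide_eq mult.commute)
  have L2eq: "(A * \<rho>^2) * (1 + p*w + p*(p-1)/2 * w^2) = A*\<rho>^2 + p*A*\<rho>*(1-\<rho>) + p*(p-1)/2*A*(1-\<rho>)^2"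
    using \<rho> by (simp add: w_def field_simps power2_eq_square)
  have L2: "A*\<rho>^2 + p*A*\<rho>*(1-\<rho>) + p*(p-1)/2*A*(1-\<rho>)^2 \<le> 1"
    using L2conv[OF L2base(1)[OF p w0, unfolded ow2]] L2eq by simp
  have s2: "s^2 \<ge> 0" by simp
  have tgt: "(1-s^2) * \<rho> powr p - p * s * (1+s) * \<rho> powr (p-1) * (1-\<rho>) + s^2
     = (A * \<rho>^2 - p * A * \<rho> * s * (1-\<rho>) + p*(p-1)/2 * A * s^2 * (1-\<rho>)^2)
       + s^2 * (1 - (A*\<rho>^2 + p*A*\<rho>*(1-\<rho>) + p*(p-1)/2*A*(1-\<rho>)^2))"
    by (simp add: e1 e2 algebra_simps power2_eq_square)
  show "r powr p \<le> (1-s^2) * \<rho> powr p - p * s * (1+s) * \<rho> powr (p-1) * (1-\<rho>) + s^2"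
    unfolding tgt using L1 mult_nonneg_nonneg[OF s2, of "1 - (A*\<rho>^2 + p*A*\<rho>*(1-\<rho>) + p*(p-1)/2*A*(1-\<rho>)^2)"] L2
    by linarith
  assume p2: "p > 2" and sp: "s > 0" and \<rho>1: "\<rho> < 1"
  have wp: "w > 0" using \<rho> \<rho>1 by (simp add: w_def)
  have L2conv': "1 / (A * \<rho>^2) > X \<Longrightarrow> 1 > (A * \<rho>^2) * X" for X
    using A0 \<rho> by (simp add: less_divide_eq mult.commute)
  have L2s: "A*\<rho>^2 + p*A*\<rho>*(1-\<rho>) + p*(p-1)/2*A*(1-\<rho>)^2 < 1"
    using L2conv'[OF L2base(2)[OF p w0 p2 wp, unfolded ow2]] L2eq by simp
  have s2p: "s^2 > 0" using sp by simp
  show "r powr p < (1-s^2) * \<rho> powr p - p * s * (1+s) * \<rho> powr (p-1) * (1-\<rho>) + s^2"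
    unfolding tgt using L1 mult_pos_pos[OF s2p, of "1 - (A*\<rho>^2 + p*A*\<rho>*(1-\<rho>) + p*(p-1)/2*A*(1-\<rho>)^2)"] L2s
    by linarith
qed


lemma Qge1:
  fixes p \<tau> :: real assumes p: "p \<ge> 2" and \<tau>: "\<tau> \<ge> 1"
  shows "(\<tau>-1) powr p - \<tau> powr p + p * \<tau> powr (p-1) \<ge> 1"
proof -
  define y where "y = 1/\<tau>"
  have y0: "0 \<le> y" and y1: "y \<le> 1" using \<tau> by (auto simp: y_def)
  let ?m = "\<lambda>x::real. (1-x) powr p + p*x - x powr p"
  have "?m 0 \<le> ?m y"
  proof (rule DERIV_nonneg_imp_increasing_open[OF y0])
    fix x :: real assume x: "0 < x" "x < y"
    have der: "DERIV ?m x :> - p * (1-x) powr (p-1) + p - p * x powr (p-1)"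
      using x y1 by (auto intro!: derivative_eq_intros simp: field_simps)
    have a1: "(1-x) powr (p-1) \<le> (1-x) powr 1" using x y1 p by (intro powr_mono') auto
    have a2: "x powr (p-1) \<le> x powr 1" using x y1 p by (intro powr_mono') auto
    have "(1-x) powr (p-1) + x powr (p-1) \<le> 1" using a1 a2 x y1 by simp
    then have "p * ((1-x) powr (p-1) + x powr (p-1)) \<le> p * 1" using p by (intro mult_left_mono) auto
    then have "- p * (1-x) powr (p-1) + p - p * x powr (p-1) \<ge> 0" by (simp add: algebra_simps)
    then show "\<exists>d. DERIV ?m x :> d \<and> d \<ge> 0" using der by blast
  next
    show "continuous_on {0..y} ?m" using p y1
      by (intro continuous_intros continuous_on_powr') auto
  qed
  then have m: "(1-y) powr p + p*y - y powr p \<ge> 1" using p by simp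
  have tp: "\<tau> powr p > 0" using \<tau> by simp
  have "\<tau> powr p * ((1-y) powr p + p*y - y powr p) \<ge> \<tau> powr p * 1"
    using m tp by (intro mult_left_mono) auto
  moreover have "\<tau> powr p * (1-y) powr p = (\<tau>-1) powr p"
  proof -
    have "\<tau> * (1-y) = \<tau> - 1" using \<tau> by (simp add: y_def field_simps)
    then show ?thesis by (metis powr_mult)
  qed
  moreover have "\<tau> powr p * y = \<tau> powr (p-1)"
    using powr_split(1)[of \<tau> p] \<tau> by (simp add: y_def)
  moreover have "\<tau> powr p * y powr p = 1"
    using \<tau> by (simp add: powr_mult[symmetric] y_def)
  ultimately have "(\<tau>-1) powr p + p * \<tau> powr (p-1) - 1 \<ge> \<tau> powr p"
    by (simp add: algebra_simps)
  then show ?thesis by simp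
qed

lemma Qsym:
  fixes p \<tau> :: real assumes p: "p \<ge> 2" and \<tau>: "1/2 < \<tau>" "\<tau> < 1"
  shows "cfun p \<tau> \<ge> cfun p (1-\<tau>)"
proof -
  define \<sigma> where "\<sigma> = 1 - \<tau>"
  have \<sigma>: "0 < \<sigma>" "\<sigma> < \<tau>" using \<tau> by (auto simp: \<sigma>_def)
  define A where "A = \<tau> powr (p-1)"
  define B where "B = \<sigma> powr (p-1)"
  have eA: "\<tau> powr p = A * \<tau>" using powr_split(1)[of \<tau> p] \<tau> by (simp add: A_def)
  have eB: "\<sigma> powr p = B * \<sigma>" using powr_split(1)[of \<sigma> p] \<sigma> by (simp add: B_def)
  have m2: "\<sigma> powr (p-2) \<le> \<tau> powr (p-2)" using \<sigma> p by (intro powr_mono2) auto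
  have "\<sigma> powr (p-2) * (\<tau> * \<sigma>) \<le> \<tau> powr (p-2) * (\<tau> * \<sigma>)"
    using m2 \<sigma> by (intro mult_right_mono) auto
  then have AB: "B * \<tau> \<le> A * \<sigma>"
    using powr_split(2)[of \<tau> p] powr_split(2)[of \<sigma> p] \<sigma> by (simp add: A_def B_def algebra_simps)
  have AB2: "B \<le> A" using \<sigma> p by (simp add: A_def B_def powr_mono2)
  have "cfun p \<tau> = \<sigma> powr p - \<tau> powr p + p * A" by (simp add: cfun_def \<sigma>_def A_def)
  moreover have "cfun p (1-\<tau>) = \<tau> powr p - \<sigma> powr p + p * B" by (simp add: cfun_def \<sigma>_def B_def)
  moreover have "B * \<sigma> - A * \<tau> + p * A \<ge> A * \<tau> - B * \<sigma> + p * B"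
  proof -
    have "A * \<tau> - B * \<sigma> \<le> A - B" using AB \<sigma> by (simp add: \<sigma>_def algebra_simps)
    moreover have "2 * (A - B) \<le> p * (A - B)" using AB2 p by (intro mult_right_mono) auto
    ultimately show ?thesis by (simp add: algebra_simps)
  qed
  ultimately show ?thesis using eA eB by simp
qed

lemma cfun_nonneg: "p \<ge> 2 \<Longrightarrow> 0 \<le> \<tau> \<Longrightarrow> \<tau> \<le> 1/2 \<Longrightarrow> cfun p \<tau> > 0"
proof -
  assume p: "p \<ge> 2" and t: "0 \<le> \<tau>" "\<tau> \<le> 1/2"
  have "\<tau> powr p \<le> (1-\<tau>) powr p" using t p by (intro powr_mono2) auto
  moreover have "p * \<tau> powr (p-1) \<ge> 0" using p by simp
  moreover have "\<tau> = 0 \<or> p * \<tau> powr (p-1) > 0" using p t by (cases "\<tau> = 0") auto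
  moreover have "\<tau> = 0 \<Longrightarrow> cfun p \<tau> = 1" using p by (simp add: cfun_def)
  ultimately show ?thesis unfolding cfun_def by fastforce
qed

lemma cfun_half: "p \<ge> 2 \<Longrightarrow> cfun p (1/2) = p / 2 powr (p-1)"
  by (simp add: cfun_def powr_divide)

lemma cfun_half_lt: "p > 2 \<Longrightarrow> cfun p (1/2) < 1"
proof -
  assume p: "p > 2"
  have "2 powr (p-1) > 1 + (p-1)*(2-1)" using bern_strict[of "p-1" 2] p by simp
  then show ?thesis using p cfun_half[of p] by (simp add: divide_less_eq)
qed

lemma cfun_zero: "p \<ge> 2 \<Longrightarrow> cfun p 0 = 1"
  by (simp add: cfun_def)

lemma cfun_two: "0 \<le> \<tau> \<Longrightarrow> \<tau> \<le> 1 \<Longrightarrow> cfun 2 \<tau> = 1"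
  by (simp add: cfun_def power2_eq_square algebra_simps)

lemma cconst_props:
  fixes p :: real assumes p: "p \<ge> 2"
  shows "\<exists>\<tau>0\<in>{0<..<1/2}. cconst p = cfun p \<tau>0 \<and> (\<forall>\<tau>\<in>{0..1/2}. cfun p \<tau>0 \<le> cfun p \<tau>)"
proof -
  have "\<exists>\<tau>0\<in>{0<..<1/2}. \<forall>\<tau>\<in>{0..1/2}. cfun p \<tau>0 \<le> cfun p \<tau>"
  proof (cases "p = 2")
    case True
    show ?thesis by (rule bexI[of _ "1/4"]) (auto simp: True cfun_two)
  next
    case False
    then have p2: "p > 2" using p by simp
    have cont: "continuous_on {0..1/2} (cfun p)"
      unfolding cfun_def using p by (intro continuous_intros continuous_on_powr') auto
    obtain \<tau>0 where t0: "\<tau>0 \<in> {0..1/2}" and mn: "\<forall>\<tau>\<in>{0..1/2}. cfun p \<tau>0 \<le> cfun p \<tau>"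
      using continuous_attains_inf[OF compact_Icc _ cont] by auto
    have n0: "\<tau>0 \<noteq> 0"
    proof
      assume "\<tau>0 = 0"
      then have "1 \<le> cfun p (1/2)" using mn cfun_zero[OF p] by auto
      then show False using cfun_half_lt[OF p2] by simp
    qed
    have nh: "\<tau>0 \<noteq> 1/2"
    proof
      assume th: "\<tau>0 = 1/2"
      define B where "B = (1/2::real) powr (p-2)"
      have Bp: "B > 0" by (simp add: B_def)
      have e: "(1/2::real) powr (p-1) = B * (1/2)" using powr_split(2)[of "1/2" p] by (simp add: B_def)
      have der: "DERIV (cfun p) (1/2) :> - p * (1/2) powr (p-1) - p * (1/2) powr (p-1) + p * ((p-1) * (1/2) powr (p-1-1))"
        unfolding cfun_def by (auto intro!: derivative_eq_intros simp: field_simps)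
      have lpos: "- p * (1/2) powr (p-1) - p * (1/2) powr (p-1) + p * ((p-1) * (1/2) powr (p-1-1)) > (0::real)"
      proof -
        have "- p * (1/2) powr (p-1) - p * (1/2) powr (p-1) + p * ((p-1) * (1/2) powr (p-1-1)) = p * B * (p-2)"
          using e by (simp add: B_def algebra_simps)
        then show ?thesis using p2 Bp by simp
      qed
      obtain d where d: "d > 0" "\<forall>h>0. h < d \<longrightarrow> cfun p (1/2 - h) < cfun p (1/2)"
        using DERIV_pos_inc_left[OF der lpos] by blast
      define h where "h = min (d/2) (1/4)"
      have "cfun p (1/2 - h) < cfun p (1/2)" using d by (simp add: h_def)
      moreover have "1/2 - h \<in> {0..1/2}" using d by (auto simp: h_def)
      ultimately show False using mn th by fastforce
    qed
    show ?thesis using t0 n0 nh mn by (intro bexI[of _ \<tau>0]) auto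
  qed
  then obtain \<tau>0 where t0: "\<tau>0\<in>{0<..<1/2}" and mn: "\<forall>\<tau>\<in>{0..1/2}. cfun p \<tau>0 \<le> cfun p \<tau>" by blast
  have "cconst p = cfun p \<tau>0"
    unfolding cconst_def
    by (rule cInf_eq_minimum) (use t0 mn in auto)
  then show ?thesis using t0 mn by blast
qed


lemma cconst_le1: "p \<ge> 2 \<Longrightarrow> cconst p \<le> 1"
  using cconst_props[of p] cfun_zero[of p] by force

lemma cconst_pos: "p \<ge> 2 \<Longrightarrow> cconst p > 0"
  using cconst_props[of p] cfun_nonneg[of p] by force

lemma cconst_lt1: "p > 2 \<Longrightarrow> cconst p < 1"
proof -
  assume p: "p > 2"
  obtain \<tau>0 where "cconst p = cfun p \<tau>0" "\<forall>\<tau>\<in>{0..1/2}. cfun p \<tau>0 \<le> cfun p \<tau>"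
    using cconst_props[of p] p by auto
  then have "cconst p \<le> cfun p (1/2)" by auto
  then show ?thesis using cfun_half_lt[OF p] by simp
qed

lemma Qabs:
  fixes p \<tau> :: real assumes p: "p \<ge> 2" and \<tau>: "\<tau> > 0"
  shows "\<bar>1-\<tau>\<bar> powr p - \<tau> powr p + p * \<tau> powr (p-1) \<ge> cconst p"
proof -
  obtain \<tau>0 where c: "cconst p = cfun p \<tau>0" and mn: "\<forall>\<tau>\<in>{0..1/2}. cfun p \<tau>0 \<le> cfun p \<tau>"
    using cconst_props[OF p] by auto
  consider "\<tau> \<le> 1/2" | "1/2 < \<tau>" "\<tau> < 1" | "\<tau> \<ge> 1" by linarith
  then show ?thesis
  proof cases
    case 1
    then have "cfun p \<tau>0 \<le> cfun p \<tau>" using mn \<tau> by auto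
    then show ?thesis using 1 c by (simp add: cfun_def)
  next
    case 2
    then have "cfun p \<tau>0 \<le> cfun p (1-\<tau>)" using mn by auto
    then show ?thesis using 2 c Qsym[OF p 2] by (simp add: cfun_def)
  next
    case 3
    then show ?thesis using Qge1[OF p 3] cconst_le1[OF p] by simp
  qed
qed

lemma Gineq:
  fixes p w y :: real assumes p: "p \<ge> 2" and w: "w > 0" and y: "y > 0"
  shows "\<bar>y - w\<bar> powr p \<ge> w powr p - p * w powr (p-1) * y + cconst p * y powr p"
proof -
  define \<tau> where "\<tau> = w / y"
  have tp: "\<tau> > 0" using w y by (simp add: \<tau>_def)
  have Q: "\<bar>1-\<tau>\<bar> powr p - \<tau> powr p + p * \<tau> powr (p-1) \<ge> cconst p" by (rule Qabs[OF p tp])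
  have yp: "y powr p > 0" using y by simp
  have "y powr p * (\<bar>1-\<tau>\<bar> powr p - \<tau> powr p + p * \<tau> powr (p-1)) \<ge> y powr p * cconst p"
    using Q yp by (intro mult_left_mono) auto
  moreover have "y powr p * \<bar>1-\<tau>\<bar> powr p = \<bar>y - w\<bar> powr p"
  proof -
    have "y * \<bar>1-\<tau>\<bar> = \<bar>y - w\<bar>" using y by (simp add: \<tau>_def abs_mult[symmetric] field_simps)
    then show ?thesis by (metis powr_mult)
  qed
  moreover have "y powr p * \<tau> powr p = w powr p"
    using y by (simp add: \<tau>_def powr_mult[symmetric])
  moreover have "y powr p * \<tau> powr (p-1) = w powr (p-1) * y"
  proof -
    have "y powr p = y powr (p-1) * y" by (rule powr_split(1)[OF y])
    moreover have "y powr (p-1) * \<tau> powr (p-1) = w powr (p-1)"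
      using y by (simp add: \<tau>_def powr_mult[symmetric])
    ultimately show ?thesis by (simp add: algebra_simps)
  qed
  ultimately show ?thesis by (simp add: algebra_simps)
qed


lemma Fmono:
  fixes p W v1 v2 :: real
  assumes p: "p \<ge> 2" and W: "W > 0" and v: "0 < v1" "v1 \<le> v2"
  shows "v1 powr (p-2) * ((1-p/2) * v1^2 - p/2 * W) \<ge> v2 powr (p-2) * ((1-p/2) * v2^2 - p/2 * W)"
proof -
  have A: "v1 powr (p-2) \<le> v2 powr (p-2)" using p v by (intro powr_mono2) auto
  have A2: "v2 powr (p-2) \<ge> 0" by simp
  have B0: "(1-p/2) * v1^2 \<le> 0" using p by (intro mult_nonpos_nonneg) auto
  have "p/2 * W \<ge> 0" using p W by simp
  then have B1: "(1-p/2) * v1^2 - p/2 * W \<le> 0" using B0 by linarith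
  have vv: "v1^2 \<le> v2^2" using v by (intro power_mono) auto
  have B: "(1-p/2) * v1^2 - p/2 * W \<ge> (1-p/2) * v2^2 - p/2 * W"
    using mult_left_mono_neg[OF vv, of "1-p/2"] p by simp
  have "v1 powr (p-2) * ((1-p/2) * v1^2 - p/2 * W) \<ge> v2 powr (p-2) * ((1-p/2) * v1^2 - p/2 * W)"
    using mult_right_mono_neg[OF A B1] .
  moreover have "v2 powr (p-2) * ((1-p/2) * v1^2 - p/2 * W) \<ge> v2 powr (p-2) * ((1-p/2) * v2^2 - p/2 * W)"
    using mult_left_mono[OF B A2] .
  ultimately show ?thesis by linarith
qed

lemma Tform:
  fixes p v y W :: real
  assumes v: "v > 0" and yv: "2 * v * y = v^2 + W"
  shows "v powr p - p * v powr (p-1) * y = v powr (p-2) * ((1-p/2) * v^2 - p/2 * W)"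
proof -
  have e1: "v powr (p-1) = v powr (p-2) * v" and e2: "v powr p = v powr (p-2) * v^2"
    using powr_split[OF v, of p] by auto
  have "p * v powr (p-1) * y = p/2 * v powr (p-2) * (2 * v * y)" by (simp add: e1 algebra_simps)
  also have "\<dots> = p/2 * v powr (p-2) * (v^2 + W)" by (simp add: yv)
  finally show ?thesis by (simp add: e2 algebra_simps)
qed

lemma caseneg:
  fixes p s r d y :: real
  assumes p: "p \<ge> 2" and s: "0 < s" "s < 1" and r: "0 \<le> r" "r < s"
    and d: "d \<ge> 0" "d \<ge> s^2 - r" and y: "y \<ge> s * (1-r)"
    and st: "y^2 - d^2 = (1-s^2) * (s^2 - r^2)"
  shows "d powr p \<ge> (1-s^2) powr (p-1) * (r powr p - s^2) + cconst p * y powr p"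
    and "p > 2 \<Longrightarrow> d powr p > (1-s^2) powr (p-1) * (r powr p - s^2) + cconst p * y powr p"
proof -
  define W where "W = (1-s^2) * (s^2 - r^2)"
  have s2: "s^2 < 1" using s by (simp add: power_less_one_iff)
  have rs2: "r^2 < s^2" using r by (intro power_strict_mono) auto
  have Wp: "W > 0" using s2 rs2 by (simp add: W_def)
  have y0: "y > 0"
  proof -
    have "y^2 > d^2" using st Wp W_def by simp
    then show ?thesis using d y s r by (smt (verit) mult_nonneg_nonneg power2_le_imp_le)
  qed
  have yd: "y > d"
  proof -
    have "y^2 > d^2" using st Wp W_def by simp
    then show ?thesis using d y0 by (smt (verit) power2_le_imp_le)
  qed
  define w where "w = y - d"
  have wp: "w > 0" using yd by (simp add: w_def)
  define ws where "ws = (1-s) * (s+r)"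
  have wsp: "ws > 0" using s r by (simp add: ws_def)
  have Wfac: "W = ws * ((1+s) * (s-r))" by (simp add: W_def ws_def power2_eq_square algebra_simps)
  have wyd: "w * (y + d) = W" using st by (simp add: w_def W_def power2_eq_square algebra_simps)
  have ydl: "y + d \<ge> (1+s) * (s-r)" using d y by (simp add: power2_eq_square algebra_simps)
  have pos2: "(1+s) * (s-r) > 0" using s r by simp
  have wle: "w \<le> ws"
  proof (rule ccontr)
    assume "\<not> w \<le> ws"
    then have "w > ws" by simp
    then have "w * (y + d) > ws * (y + d)"
      using ydl pos2 by (intro mult_strict_right_mono) auto
    moreover have "ws * (y + d) \<ge> ws * ((1+s) * (s-r))"
      using ydl wsp by (intro mult_left_mono) auto
    ultimately have "w * (y + d) > ws * ((1+s) * (s-r))" by linarith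
    then show False using wyd Wfac by simp
  qed
  have G: "\<bar>y - w\<bar> powr p \<ge> w powr p - p * w powr (p-1) * y + cconst p * y powr p"
    by (rule Gineq[OF p wp y0])
  have dyw: "\<bar>y - w\<bar> = d" using d by (simp add: w_def)
  have Tw: "w powr p - p * w powr (p-1) * y = w powr (p-2) * ((1-p/2) * w^2 - p/2 * W)"
    by (rule Tform[OF wp]) (use wyd in \<open>simp add: w_def power2_eq_square algebra_simps\<close>)
  define ys where "ys = s * (1-r)"
  have Tws: "ws powr p - p * ws powr (p-1) * ys = ws powr (p-2) * ((1-p/2) * ws^2 - p/2 * W)"
    by (rule Tform[OF wsp]) (simp add: ws_def ys_def W_def power2_eq_square algebra_simps)
  have mono: "w powr p - p * w powr (p-1) * y \<ge> ws powr p - p * ws powr (p-1) * ys"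
    unfolding Tw Tws by (rule Fmono[OF p Wp wp wle])
  define \<rho> where "\<rho> = (r+s)/(1+s)"
  have \<rho>0: "0 < \<rho>" and \<rho>1: "\<rho> < 1" using s r by (auto simp: \<rho>_def field_simps)
  have r\<rho>: "r = \<rho> - s * (1-\<rho>)"
  proof -
    have h: "\<rho> * (1+s) = r + s" using s by (simp add: \<rho>_def)
    then have "\<rho> + \<rho> * s = r + s" by (simp add: algebra_simps)
    then show ?thesis by (simp add: algebra_simps)
  qed
  have wsr: "ws = (1-s^2) * \<rho>" using s by (simp add: ws_def \<rho>_def field_simps power2_eq_square)
  have ysr: "ys = s * (1+s) * (1-\<rho>)" using s by (simp add: ys_def \<rho>_def field_simps)
  have PhiA: "r powr p \<le> (1-s^2) * \<rho> powr p - p * s * (1+s) * \<rho> powr (p-1) * (1-\<rho>) + s^2"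
    by (rule Phi(1)[OF p _ _ \<rho>0 _ r\<rho> r(1)]) (use s \<rho>1 in auto)
  define K where "K = (1-s^2) powr (p-1)"
  have Kp: "K > 0" using s2 by (simp add: K_def)
  have wsexp: "ws powr p - p * ws powr (p-1) * ys
      = K * ((1-s^2) * \<rho> powr p - p * s * (1+s) * \<rho> powr (p-1) * (1-\<rho>))"
  proof -
    have a1: "ws powr p = (1-s^2) powr p * \<rho> powr p" by (simp add: wsr powr_mult)
    have a2: "ws powr (p-1) = K * \<rho> powr (p-1)" by (simp add: wsr powr_mult K_def)
    have a3: "(1-s^2) powr p = K * (1-s^2)" using powr_split(1)[of "1-s^2" p] s2 by (simp add: K_def)
    show ?thesis by (simp add: a1 a2 a3 ysr algebra_simps)
  qed
  have fin: "K * (r powr p - s^2) \<le> ws powr p - p * ws powr (p-1) * ys"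
    unfolding wsexp using PhiA Kp by (intro mult_left_mono) auto
  show "d powr p \<ge> (1-s^2) powr (p-1) * (r powr p - s^2) + cconst p * y powr p"
    using G dyw mono fin by (simp add: K_def)
  assume p2: "p > 2"
  have PhiS: "r powr p < (1-s^2) * \<rho> powr p - p * s * (1+s) * \<rho> powr (p-1) * (1-\<rho>) + s^2"
    by (rule Phi(2)[OF p _ _ \<rho>0 _ r\<rho> r(1) p2 s(1) \<rho>1]) (use s \<rho>1 in auto)
  have fins: "K * (r powr p - s^2) < ws powr p - p * ws powr (p-1) * ys"
    unfolding wsexp using PhiS Kp by (intro mult_strict_left_mono) auto
  show "d powr p > (1-s^2) powr (p-1) * (r powr p - s^2) + cconst p * y powr p"
    using G dyw mono fins by (simp add: K_def)
qed


lemma superadd: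
  fixes X Y q :: real assumes X: "X \<ge> 0" and Y: "Y \<ge> 0" and q: "q \<ge> 1"
  shows "(X+Y) powr q \<ge> X powr q + Y powr q"
    and "X > 0 \<Longrightarrow> Y > 0 \<Longrightarrow> q > 1 \<Longrightarrow> (X+Y) powr q > X powr q + Y powr q"
proof -
  have sp: "Z powr q = Z * Z powr (q-1)" if "Z \<ge> 0" for Z
  proof (cases "Z = 0")
    case True then show ?thesis using q by simp
  next
    case False then show ?thesis using powr_split(1)[of Z q] that by simp
  qed
  have hX: "X powr (q-1) \<le> (X+Y) powr (q-1)" using X Y q by (intro powr_mono2) auto
  have hY: "Y powr (q-1) \<le> (X+Y) powr (q-1)" using X Y q by (intro powr_mono2) auto
  have "X * X powr (q-1) \<le> X * (X+Y) powr (q-1)" using hX X by (intro mult_left_mono)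
  moreover have "Y * Y powr (q-1) \<le> Y * (X+Y) powr (q-1)" using hY Y by (intro mult_left_mono)
  ultimately show "(X+Y) powr q \<ge> X powr q + Y powr q"
    using sp[OF X] sp[OF Y] sp[of "X+Y"] X Y by (simp add: algebra_simps)
  assume Xp: "X > 0" and Yp: "Y > 0" and q1: "q > 1"
  have hX': "X powr (q-1) < (X+Y) powr (q-1)" using Xp Yp q1 by (intro powr_less_mono2) auto
  have "X * X powr (q-1) < X * (X+Y) powr (q-1)" using hX' Xp by (intro mult_strict_left_mono)
  moreover have "Y * Y powr (q-1) \<le> Y * (X+Y) powr (q-1)" using hY Y by (intro mult_left_mono)
  ultimately show "(X+Y) powr q > X powr q + Y powr q"
    using sp[OF X] sp[OF Y] sp[of "X+Y"] X Y by (simp add: algebra_simps)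
qed

lemma main2:
  fixes p t :: real and a :: complex
  assumes p: "p \<ge> 2" and t: "0 < t" "t < 1"
  shows "cmod (a - complex_of_real t) powr p \<ge>
           (1-t) powr (p-1) * (cmod a powr p - t) + cconst p * t powr (p/2) * cmod (a-1) powr p"
    and "p > 2 \<Longrightarrow> a \<noteq> 1 \<Longrightarrow> cmod (a - complex_of_real t) powr p >
           (1-t) powr (p-1) * (cmod a powr p - t) + cconst p * t powr (p/2) * cmod (a-1) powr p"
proof -
  define d where "d = cmod (a - complex_of_real t)"
  define r where "r = cmod a"
  define b where "b = cmod (a - 1)"
  define s where "s = sqrt t"
  define y where "y = s * b"
  define q where "q = p/2"
  define c where "c = cconst p"
  have d0: "d \<ge> 0" and r0: "r \<ge> 0" and b0: "b \<ge> 0" by (auto simp: d_def r_def b_def)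
  have s0: "s > 0" and s1: "s < 1" and ss: "s^2 = t" using t by (auto simp: s_def)
  have y0: "y \<ge> 0" using s0 b0 by (simp add: y_def)
  have q1: "q \<ge> 1" using p by (simp add: q_def)
  have pw: "x powr p = (x^2) powr q" if "x \<ge> 0" for x
    using that by (simp add: q_def powr_powr flip: powr_numeral)
  have stew: "d^2 = (1-t) * (r^2 - t) + y^2"
  proof -
    have hd: "d^2 = (Re a - t)^2 + (Im a)^2" using cmod_power2[of "a - complex_of_real t"] by (simp add: d_def)
    have hr: "r^2 = (Re a)^2 + (Im a)^2" using cmod_power2[of a] by (simp add: r_def)
    have hb: "b^2 = (Re a - 1)^2 + (Im a)^2" using cmod_power2[of "a - 1"] by (simp add: b_def)
    have hy: "y^2 = t * b^2" using ss by (simp add: y_def power_mult_distrib)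
    show ?thesis by (simp only: hd hr hy hb) (simp add: power2_eq_square algebra_simps)
  qed
  have ty: "t powr (p/2) * b powr p = y powr p"
  proof -
    have "s powr p = t powr (p/2)" using t by (simp add: s_def powr_half_sqrt[symmetric] powr_powr)
    then show ?thesis by (simp add: y_def powr_mult)
  qed
  have c1: "c \<le> 1" using cconst_le1[OF p] by (simp add: c_def)
  have cp: "c > 0" using cconst_pos[OF p] by (simp add: c_def)
  define X where "X = (1-t) * (r^2 - t)"
  define Y where "Y = y^2"
  have Y0: "Y \<ge> 0" by (simp add: Y_def)
  have goal: "d powr p \<ge> (1-t) powr (p-1) * (r powr p - t) + c * y powr p
     \<and> (p > 2 \<longrightarrow> a \<noteq> 1 \<longrightarrow> d powr p > (1-t) powr (p-1) * (r powr p - t) + c * y powr p)"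
  proof (cases "X \<ge> 0")
    case True
    have rt: "r^2 - t \<ge> 0" using True t by (simp add: X_def zero_le_mult_iff)
    have dX: "d powr p = (X + Y) powr q" using pw[OF d0] stew by (simp add: X_def Y_def)
    have Yq: "Y powr q = y powr p" using pw[OF y0] by (simp add: Y_def)
    have rq: "(r^2) powr q = r powr p" using pw[OF r0] by simp
    have nrm: "cmod (complex_of_real u - complex_of_real t) = \<bar>u - t\<bar>" for u
      by (metis norm_of_real of_real_diff)
    have P1: "\<bar>r^2 - t\<bar> powr q \<ge> (1-t) powr (q-1) * ((r^2) powr q - t)"
      using part1(1)[OF q1, of t "complex_of_real (r^2)"] t
      unfolding nrm norm_of_real by simp
    have Xq: "X powr q = (1-t) powr q * (r^2 - t) powr q" by (simp add: X_def powr_mult)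
    have K: "(1-t) powr q * (1-t) powr (q-1) = (1-t) powr (p-1)"
      using t by (simp add: powr_add[symmetric] q_def)
    have Xb: "X powr q \<ge> (1-t) powr (p-1) * (r powr p - t)"
    proof -
      have "(1-t) powr q * (r^2 - t) powr q \<ge> (1-t) powr q * ((1-t) powr (q-1) * ((r^2) powr q - t))"
        using P1 rt by (intro mult_left_mono) auto
      moreover have "(1-t) powr q * ((1-t) powr (q-1) * (r powr p - t)) = (1-t) powr (p-1) * (r powr p - t)"
        using K by (metis mult.assoc)
      ultimately show ?thesis using Xq rq by simp
    qed
    have cY: "c * y powr p \<le> Y powr q"
    proof -
      have "c * y powr p \<le> 1 * y powr p" using c1 by (intro mult_right_mono) auto
      then show ?thesis using Yq by simp
    qed
    have SA: "(X+Y) powr q \<ge> X powr q + Y powr q" by (rule superadd(1)[OF True Y0 q1])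
    have A: "d powr p \<ge> (1-t) powr (p-1) * (r powr p - t) + c * y powr p"
      using dX SA Xb cY by linarith
    have B: "d powr p > (1-t) powr (p-1) * (r powr p - t) + c * y powr p" if p2: "p > 2" and a1: "a \<noteq> 1"
    proof -
      have q1': "q > 1" using p2 by (simp add: q_def)
      have bp: "b > 0" using a1 by (simp add: b_def)
      have Yp: "Y > 0" using bp s0 by (simp add: Y_def y_def)
      show ?thesis
      proof (cases "X > 0")
        case True
        have "(X+Y) powr q > X powr q + Y powr q" by (rule superadd(2)[OF _ Y0 q1 True Yp q1']) (use True in simp)
        then show ?thesis using dX Xb cY by linarith
      next
        case False
        then have X0: "X = 0" using \<open>X \<ge> 0\<close> by simp
        then have r2t: "r^2 = t" using t by (simp add: X_def)
        have P1s: "\<bar>r^2 - t\<bar> powr q > (1-t) powr (q-1) * ((r^2) powr q - t)"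
          using part1(2)[OF q1, of t "complex_of_real (r^2)"] t q1' r2t
          unfolding nrm norm_of_real by (simp del: of_real_power)
        have "(1-t) powr q * (r^2 - t) powr q > (1-t) powr q * ((1-t) powr (q-1) * ((r^2) powr q - t))"
          using P1s rt t by (intro mult_strict_left_mono) auto
        moreover have "(1-t) powr q * ((1-t) powr (q-1) * (r powr p - t)) = (1-t) powr (p-1) * (r powr p - t)"
          using K by (metis mult.assoc)
        ultimately have "X powr q > (1-t) powr (p-1) * (r powr p - t)" using Xq rq by simp
        then show ?thesis using dX SA cY by linarith
      qed
    qed
    show ?thesis using A B by blast
  next
    case False
    then have rt: "r^2 < t" using t by (smt (verit) X_def mult_nonneg_nonneg)
    have rs: "r < s" using rt ss r0 s0 by (smt (verit) power_mono)
    have dge: "d \<ge> s^2 - r"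
    proof -
      have "cmod (complex_of_real t) \<le> cmod a + cmod (a - complex_of_real t)"
        by (metis add.commute diff_add_cancel norm_minus_commute norm_triangle_ineq4 add_diff_cancel_left')
      then show ?thesis using t ss by (simp add: d_def r_def)
    qed
    have yge: "y \<ge> s * (1-r)"
    proof -
      have "cmod (1::complex) \<le> cmod a + cmod (a - 1)"
        by (metis add.commute diff_add_cancel norm_minus_commute norm_triangle_ineq4 add_diff_cancel_left')
      then have "1 - r \<le> b" by (simp add: r_def b_def)
      then show ?thesis using s0 by (simp add: y_def)
    qed
    have st: "y^2 - d^2 = (1-s^2) * (s^2 - r^2)" using stew ss by (simp add: algebra_simps)
    have C1: "d powr p \<ge> (1-s^2) powr (p-1) * (r powr p - s^2) + cconst p * y powr p"
      by (rule caseneg(1)[OF p s0 s1 r0 rs d0 dge yge st])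
    have C2: "p > 2 \<Longrightarrow> d powr p > (1-s^2) powr (p-1) * (r powr p - s^2) + cconst p * y powr p"
      by (rule caseneg(2)[OF p s0 s1 r0 rs d0 dge yge st])
    show ?thesis using C1 C2 ss by (simp add: c_def)
  qed
  show "cmod (a - complex_of_real t) powr p \<ge>
           (1-t) powr (p-1) * (cmod a powr p - t) + cconst p * t powr (p/2) * cmod (a-1) powr p"
    using goal ty by (simp add: d_def r_def b_def c_def mult.assoc)
  show "p > 2 \<Longrightarrow> a \<noteq> 1 \<Longrightarrow> cmod (a - complex_of_real t) powr p >
           (1-t) powr (p-1) * (cmod a powr p - t) + cconst p * t powr (p/2) * cmod (a-1) powr p"
    using goal ty by (simp add: d_def r_def b_def c_def mult.assoc)
qed


lemma rpow_pos: "x > 0 \<Longrightarrow> rpow x y = x powr y"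
  by (simp add: rpow_def)

lemma rpow_zero: "y \<noteq> 0 \<Longrightarrow> rpow 0 y = 0"
  by (simp add: rpow_def)

lemma stewart_c:
  fixes a :: complex and t :: real
  shows "cmod (a - complex_of_real t)^2 = (1-t) * (cmod a^2 - t) + t * cmod (a-1)^2"
proof -
  have hd: "cmod (a - complex_of_real t)^2 = (Re a - t)^2 + (Im a)^2" using cmod_power2[of "a - complex_of_real t"] by simp
  have hr: "cmod a^2 = (Re a)^2 + (Im a)^2" using cmod_power2[of a] by simp
  have hb: "cmod (a-1)^2 = (Re a - 1)^2 + (Im a)^2" using cmod_power2[of "a - 1"] by simp
  show ?thesis by (simp only: hd hr hb) (simp add: power2_eq_square algebra_simps)
qed

theorem lemma2p6:
  fixes p :: real
  assumes "p \<ge> 1"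
  shows
   "(\<forall>t a. 0 \<le> t \<and> t \<le> 1 \<longrightarrow>
       cmod (a - complex_of_real t) powr p \<ge> rpow (1 - t) (p - 1) * (cmod a powr p - t))
  \<and> (p > 1 \<longrightarrow> (\<forall>t a. 0 \<le> t \<and> t \<le> 1 \<and> a \<noteq> 1 \<and> t \<noteq> 0 \<longrightarrow>
       cmod (a - complex_of_real t) powr p > rpow (1 - t) (p - 1) * (cmod a powr p - t)))
  \<and> (p \<ge> 2 \<longrightarrow>
       (\<exists>\<tau>\<in>{0<..<1/2}. cfun p \<tau> = cconst p)
     \<and> (\<forall>\<tau>\<in>{0<..<1/2}. cconst p \<le> cfun p \<tau>)
     \<and> 0 < cconst p \<and> cconst p \<le> 1
     \<and> (\<forall>t a. 0 \<le> t \<and> t \<le> 1 \<longrightarrow>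
          cmod (a - complex_of_real t) powr p \<ge>
            rpow (1 - t) (p - 1) * (cmod a powr p - t) + cconst p * t powr (p / 2) * cmod (a - 1) powr p))
  \<and> (p = 2 \<longrightarrow> cconst p = 1 \<and> (\<forall>t a. 0 \<le> t \<and> t \<le> 1 \<longrightarrow>
          cmod (a - complex_of_real t) powr p =
            rpow (1 - t) (p - 1) * (cmod a powr p - t) + cconst p * t powr (p / 2) * cmod (a - 1) powr p))
  \<and> (p > 2 \<longrightarrow> (\<forall>t a. 0 \<le> t \<and> t \<le> 1 \<and> a \<noteq> 1 \<and> t \<noteq> 0 \<longrightarrow>
          cmod (a - complex_of_real t) powr p >
            rpow (1 - t) (p - 1) * (cmod a powr p - t) + cconst p * t powr (p / 2) * cmod (a - 1) powr p))"
proof -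
  have p1: "p \<ge> 1" by (rule assms)
  have A: "cmod (a - complex_of_real t) powr p \<ge> rpow (1 - t) (p - 1) * (cmod a powr p - t)"
    if t: "0 \<le> t" "t \<le> 1" for t a
  proof (cases "t = 1")
    case True
    show ?thesis
    proof (cases "p = 1")
      case True
      have "cmod a \<le> cmod (a - 1) + cmod (1::complex)"
        by (metis diff_add_cancel norm_triangle_ineq)
      then show ?thesis using \<open>t = 1\<close> True by (simp add: rpow_def)
    next
      case False
      then show ?thesis using \<open>t = 1\<close> by (simp add: rpow_zero)
    qed
  next
    case False
    then have "t < 1" using t by simp
    then show ?thesis using part1(1)[OF p1 t(1) \<open>t<1\<close>, of a] by (simp add: rpow_pos)
  qed
  have B: "cmod (a - complex_of_real t) powr p > rpow (1 - t) (p - 1) * (cmod a powr p - t)"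
    if pp: "p > 1" and t: "0 \<le> t" "t \<le> 1" and a1: "a \<noteq> 1" and t0: "t \<noteq> 0" for t a
  proof (cases "t = 1")
    case True
    then show ?thesis using pp a1 by (simp add: rpow_zero)
  next
    case False
    then have "t < 1" using t by simp
    then show ?thesis using part1(2)[OF p1 t(1) \<open>t<1\<close> pp a1 t0] by (simp add: rpow_pos)
  qed
  have C: "(\<exists>\<tau>\<in>{0<..<1/2}. cfun p \<tau> = cconst p)
     \<and> (\<forall>\<tau>\<in>{0<..<1/2}. cconst p \<le> cfun p \<tau>)
     \<and> 0 < cconst p \<and> cconst p \<le> 1
     \<and> (\<forall>t a. 0 \<le> t \<and> t \<le> 1 \<longrightarrow>
          cmod (a - complex_of_real t) powr p \<ge>
            rpow (1 - t) (p - 1) * (cmod a powr p - t) + cconst p * t powr (p / 2) * cmod (a - 1) powr p)"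
    if p2: "p \<ge> 2"
  proof -
    obtain \<tau>0 where t0: "\<tau>0\<in>{0<..<1/2}" and c: "cconst p = cfun p \<tau>0"
      and mn: "\<forall>\<tau>\<in>{0..1/2}. cfun p \<tau>0 \<le> cfun p \<tau>"
      using cconst_props[OF p2] by blast
    have I: "cmod (a - complex_of_real t) powr p \<ge>
            rpow (1 - t) (p - 1) * (cmod a powr p - t) + cconst p * t powr (p / 2) * cmod (a - 1) powr p"
      if t: "0 \<le> t" "t \<le> 1" for t a
    proof -
      consider "t = 0" | "t = 1" | "0 < t" "t < 1" using t by linarith
      then show ?thesis
      proof cases
        case 1 then show ?thesis by (simp add: rpow_def)
      next
        case 2
        have "cconst p * cmod (a - 1) powr p \<le> 1 * cmod (a - 1) powr p"
          using cconst_le1[OF p2] by (intro mult_right_mono) auto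
        then show ?thesis using 2 p2 by (simp add: rpow_zero)
      next
        case 3
        then show ?thesis using main2(1)[OF p2 3, of a] by (simp add: rpow_pos)
      qed
    qed
    show ?thesis using t0 c mn cconst_pos[OF p2] cconst_le1[OF p2] I by force
  qed
  have D: "cconst p = 1 \<and> (\<forall>t a. 0 \<le> t \<and> t \<le> 1 \<longrightarrow>
          cmod (a - complex_of_real t) powr p =
            rpow (1 - t) (p - 1) * (cmod a powr p - t) + cconst p * t powr (p / 2) * cmod (a - 1) powr p)"
    if p2: "p = 2"
  proof -
    obtain \<tau>0 where t0: "\<tau>0\<in>{0<..<1/2}" and c: "cconst p = cfun p \<tau>0"
      using cconst_props[of p] p2 by auto
    have c1: "cconst p = 1" using c t0 p2 cfun_two[of \<tau>0] by auto
    have "cmod (a - complex_of_real t) powr p =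
            rpow (1 - t) (p - 1) * (cmod a powr p - t) + cconst p * t powr (p / 2) * cmod (a - 1) powr p"
      if t: "0 \<le> t" "t \<le> 1" for t a
    proof -
      have "rpow (1-t) 1 = 1 - t" using t by (simp add: rpow_def)
      then show ?thesis using p2 c1 t stewart_c[of a t] by simp
    qed
    then show ?thesis using c1 by blast
  qed
  have E: "cmod (a - complex_of_real t) powr p >
            rpow (1 - t) (p - 1) * (cmod a powr p - t) + cconst p * t powr (p / 2) * cmod (a - 1) powr p"
    if p2: "p > 2" and t: "0 \<le> t" "t \<le> 1" and a1: "a \<noteq> 1" and t0: "t \<noteq> 0" for t a
  proof (cases "t = 1")
    case True
    have "cmod (a - 1) powr p > 0" using a1 by simp
    then have "cconst p * cmod (a - 1) powr p < 1 * cmod (a - 1) powr p"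
      using cconst_lt1[OF p2] by (intro mult_strict_right_mono) auto
    then show ?thesis using True p2 by (simp add: rpow_zero)
  next
    case False
    then have "0 < t" "t < 1" using t t0 by auto
    then show ?thesis using main2(2)[OF _ \<open>0<t\<close> \<open>t<1\<close> p2 a1] p2 by (simp add: rpow_pos)
  qed
  show ?thesis using A B C D E by blast
qed

end
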